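(* Let $n,m\ge 1$, $X=\{x_1,\dots,x_m\}$, and for each $1\le i\le n$ let $A_i,B_i$ be nonempty subsets of $X$ with $A_i\cap B_i=\emptyset$. Let $\Sigma=\{A_i\rightarrow B_i:1\le i\le n\}$, a set of implications on $X$. Let $Y=\{y_1,\dots,y_n\}$ be a set disjoint from $X$, and let $\Sigma'$ be the set of implications on $X\cup Y$ consisting of $(A_i\cup (Y\setminus\{y_i\}))\rightarrow B_i$ for $1\le i\le n$, together with $Y\rightarrow X$. Then every optimum basis of the closure system on $X\cup Y$ associated with $\Sigma'$ is of the form $\{(A_i\cup(Y\setminus\{y_i\}))\rightarrow B_i: 1\le i\le n\}\cup\{Y\rightarrow S\}$, where $S$ is a minimum cardinality generator of the closure system on $X$ associated with $\Sigma$.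
   Context: An implication on a set $Z$ is a pair $A\rightarrow B$ with $A,B\subseteq Z$, $B\ne\emptyset$. For a set $\Sigma$ of implications on $Z$, the associated closure system $\langle Z,\phi\rangle$ has as closed sets exactly the $S\subseteq Z$ such that $A\subseteq S$ implies $B\subseteq S$ for every $(A\rightarrow B)\in\Sigma$, and $\phi(A)$ is the intersection of closed sets containing $A$. A set of implications is an implication basis of a closure system if its associated closure system has the same closed sets. The size of a set of implications $\{A_k\rightarrow B_k\}$ is $\sum_k(|A_k|+|B_k|)$; an optimum basis of a finite closure system is an implication basis of minimum size among all its implication bases. A generator of a closure system $\langle X,\phi\rangle$ is a set $S\subseteq X$ with $\phi(S)=X$; a minimum cardinality generator is a generator of least cardinality. *)

theory Defs
  imports Main
begin

definition is_implication :: "'a set \<Rightarrow> 'a set \<times> 'a set \<Rightarrow> bool" where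
  "is_implication Z I \<longleftrightarrow> fst I \<subseteq> Z \<and> snd I \<subseteq> Z \<and> snd I \<noteq> {}"

definition imp_closed :: "('a set \<times> 'a set) set \<Rightarrow> 'a set \<Rightarrow> bool" where
  "imp_closed \<Sigma> S \<longleftrightarrow> (\<forall>(A, B) \<in> \<Sigma>. A \<subseteq> S \<longrightarrow> B \<subseteq> S)"

definition closed_sets :: "'a set \<Rightarrow> ('a set \<times> 'a set) set \<Rightarrow> 'a set set" where
  "closed_sets Z \<Sigma> = {S. S \<subseteq> Z \<and> imp_closed \<Sigma> S}"

definition imp_closure :: "'a set \<Rightarrow> ('a set \<times> 'a set) set \<Rightarrow> 'a set \<Rightarrow> 'a set" where
  "imp_closure Z \<Sigma> A = \<Inter> {S \<in> closed_sets Z \<Sigma>. A \<subseteq> S}"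

definition implication_basis :: "'a set \<Rightarrow> 'a set set \<Rightarrow> ('a set \<times> 'a set) set \<Rightarrow> bool" where
  "implication_basis Z C \<Sigma> \<longleftrightarrow> (\<forall>I \<in> \<Sigma>. is_implication Z I) \<and> closed_sets Z \<Sigma> = C"

definition imp_size :: "('a set \<times> 'a set) set \<Rightarrow> nat" where
  "imp_size \<Sigma> = (\<Sum>(A, B) \<in> \<Sigma>. card A + card B)"

definition optimum_basis :: "'a set \<Rightarrow> 'a set set \<Rightarrow> ('a set \<times> 'a set) set \<Rightarrow> bool" where
  "optimum_basis Z C \<Sigma> \<longleftrightarrow> implication_basis Z C \<Sigma> \<and>
     (\<forall>\<Sigma>'. implication_basis Z C \<Sigma>' \<longrightarrow> imp_size \<Sigma> \<le> imp_size \<Sigma>')"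

definition generator :: "'a set \<Rightarrow> ('a set \<times> 'a set) set \<Rightarrow> 'a set \<Rightarrow> bool" where
  "generator Z \<Sigma> S \<longleftrightarrow> S \<subseteq> Z \<and> imp_closure Z \<Sigma> S = Z"

definition min_card_generator :: "'a set \<Rightarrow> ('a set \<times> 'a set) set \<Rightarrow> 'a set \<Rightarrow> bool" where
  "min_card_generator Z \<Sigma> S \<longleftrightarrow> generator Z \<Sigma> S \<and> (\<forall>T. generator Z \<Sigma> T \<longrightarrow> card S \<le> card T)"

end

theory Submission
  imports Defs
begin

definition cst :: "'b set \<times> 'b set \<Rightarrow> nat" where
  "cst e = card (fst e) + card (snd e)"

lemma imp_size_cst: "imp_size S = sum cst S"
  unfolding imp_size_def cst_def by (simp add: split_def)

lemma cost:
  fixes G :: "('b set \<times> 'b set) set"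
  assumes fin: "finite G" and mem: "(P0,Q0) \<in> G"
    and ne: "\<forall>e\<in>G. fst e \<noteq> {} \<and> finite (fst e) \<and> finite (snd e)"
    and sub: "Bs \<subseteq> \<Union>(snd ` G)"
  shows "card P0 + card Bs \<le> sum cst G \<and> (sum cst G \<le> card P0 + card Bs \<longrightarrow> G = {(P0,Bs)})"
proof -
  have s1: "sum cst G = (\<Sum>e\<in>G. card (fst e)) + (\<Sum>e\<in>G. card (snd e))"
    unfolding cst_def by (rule sum.distrib)
  have s2: "(\<Sum>e\<in>G. card (fst e)) = card P0 + (\<Sum>e\<in>G-{(P0,Q0)}. card (fst e))"
    using sum.remove[OF fin mem, of "\<lambda>e. card (fst e)"] by simp
  have s3: "card (G - {(P0,Q0)}) \<le> (\<Sum>e\<in>G-{(P0,Q0)}. card (fst e))"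
  proof -
    have "card (G - {(P0,Q0)}) = (\<Sum>e\<in>G-{(P0,Q0)}. 1)" by simp
    also have "\<dots> \<le> (\<Sum>e\<in>G-{(P0,Q0)}. card (fst e))"
      apply (rule sum_mono) using ne by (auto simp: Suc_le_eq card_gt_0_iff)
    finally show ?thesis .
  qed
  have finU: "finite (\<Union>(snd ` G))" using fin ne by auto
  have s4: "card Bs \<le> (\<Sum>e\<in>G. card (snd e))"
  proof -
    have "card Bs \<le> card (\<Union>(snd ` G))" using card_mono[OF finU sub] .
    also have "\<dots> \<le> (\<Sum>e\<in>G. card (snd e))" using card_UN_le[OF fin, of snd] by simp
    finally show ?thesis .
  qed
  show ?thesis
  proof
    show "card P0 + card Bs \<le> sum cst G" using s1 s2 s3 s4 by linarith
    show "sum cst G \<le> card P0 + card Bs \<longrightarrow> G = {(P0, Bs)}"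
    proof
      assume le: "sum cst G \<le> card P0 + card Bs"
      hence "card (G - {(P0,Q0)}) = 0" using s1 s2 s3 s4 by linarith
      hence "G - {(P0,Q0)} = {}" using fin by simp
      hence G: "G = {(P0,Q0)}" using mem by blast
      hence "Bs \<subseteq> Q0" using sub by simp
      moreover have "finite Q0" using ne G by simp
      moreover have "card Q0 \<le> card Bs" using le G by (simp add: cst_def)
      ultimately have "Bs = Q0" using card_seteq by blast
      thus "G = {(P0,Bs)}" using G by simp
    qed
  qed
qed

lemma closure_props:
  assumes "Z \<in> closed_sets Z \<Sigma>" "S \<subseteq> Z"
  shows "S \<subseteq> imp_closure Z \<Sigma> S" "imp_closure Z \<Sigma> S \<subseteq> Z"
    "imp_closure Z \<Sigma> S \<in> closed_sets Z \<Sigma>"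
proof -
  show "S \<subseteq> imp_closure Z \<Sigma> S" unfolding imp_closure_def by blast
  show "imp_closure Z \<Sigma> S \<subseteq> Z" unfolding imp_closure_def using assms by blast
  moreover have H: "b \<subseteq> imp_closure Z \<Sigma> S" if ab: "(a, b) \<in> \<Sigma>" and a: "a \<subseteq> imp_closure Z \<Sigma> S" for a b
  proof -
    show "b \<subseteq> imp_closure Z \<Sigma> S" unfolding imp_closure_def
    proof (rule Inter_greatest)
      fix W assume W: "W \<in> {W \<in> closed_sets Z \<Sigma>. S \<subseteq> W}"
      hence "a \<subseteq> W" using a unfolding imp_closure_def by blast
      with W ab show "b \<subseteq> W" unfolding closed_sets_def imp_closed_def by blast
    qed
  qed
  hence "imp_closed \<Sigma> (imp_closure Z \<Sigma> S)" unfolding imp_closed_def by blast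
  ultimately show "imp_closure Z \<Sigma> S \<in> closed_sets Z \<Sigma>" unfolding closed_sets_def by blast
qed


locale cs =
  fixes X :: "'a set" and n :: nat and A B :: "nat \<Rightarrow> 'a set" and y :: "nat \<Rightarrow> 'a"
  assumes finX: "finite X" and Xne: "X \<noteq> {}" and n1: "n \<ge> 1"
    and AB: "\<And>i. i \<in> {1..n} \<Longrightarrow> A i \<subseteq> X \<and> B i \<subseteq> X \<and> A i \<noteq> {} \<and> B i \<noteq> {} \<and> A i \<inter> B i = {}"
    and injy: "inj_on y {1..n}" and disj: "y ` {1..n} \<inter> X = {}"
begin

abbreviation "YY \<equiv> y ` {1..n}"
abbreviation "ZZ \<equiv> X \<union> YY"
abbreviation "PP i \<equiv> A i \<union> (YY - {y i})"
abbreviation "Sg \<equiv> (\<lambda>i. (PP i, B i)) ` {1..n} \<union> {(YY, X)}"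
abbreviation "CC \<equiv> closed_sets ZZ Sg"
abbreviation "SX \<equiv> (\<lambda>i. (A i, B i)) ` {1..n}"

lemma C_char: "W \<in> CC \<longleftrightarrow> W \<subseteq> ZZ \<and> (YY \<subseteq> W \<longrightarrow> X \<subseteq> W) \<and>
   (\<forall>i\<in>{1..n}. A i \<subseteq> W \<and> YY - {y i} \<subseteq> W \<longrightarrow> B i \<subseteq> W)"
  unfolding closed_sets_def imp_closed_def by auto

lemma y_notX: "i \<in> {1..n} \<Longrightarrow> y i \<notin> X" using disj by blast

lemma y_other: "i \<in> {1..n} \<Longrightarrow> j \<in> {1..n} \<Longrightarrow> i \<noteq> j \<Longrightarrow> y j \<in> YY - {y i}"
  using injy by (auto dest: inj_onD)

lemma nonclosed: "W \<subseteq> ZZ \<Longrightarrow> W \<notin> CC \<Longrightarrow>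
   YY \<subseteq> W \<or> (\<exists>i\<in>{1..n}. y i \<notin> W \<and> YY - {y i} \<subseteq> W \<and> A i \<subseteq> W)"
proof -
  assume W: "W \<subseteq> ZZ" "W \<notin> CC"
  show ?thesis
  proof (cases "YY \<subseteq> W")
    case False
    have "\<not> (\<forall>i\<in>{1..n}. A i \<subseteq> W \<and> YY - {y i} \<subseteq> W \<longrightarrow> B i \<subseteq> W)"
      using W False unfolding C_char by simp
    then obtain i where i: "i \<in> {1..n}" "A i \<subseteq> W" "YY - {y i} \<subseteq> W" by blast
    have "y i \<notin> W"
    proof
      assume "y i \<in> W"
      hence "YY \<subseteq> W" using i(3) by auto
      thus False using False by simp
    qed
    thus ?thesis using i by blast
  qed simp
qed

lemma X_closed: "X \<in> closed_sets X SX"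
  unfolding closed_sets_def imp_closed_def using AB by auto

context
  fixes So assumes opt: "optimum_basis ZZ CC So"
begin

lemma basis: "implication_basis ZZ CC So" using opt optimum_basis_def by blast

lemma cl_eq: "closed_sets ZZ So = CC" using basis by (simp add: implication_basis_def)

lemma F1: assumes "(p,q) \<in> So" "W \<in> CC" "p \<subseteq> W" shows "q \<subseteq> W"
proof -
  have "W \<in> closed_sets ZZ So" using cl_eq assms(2) by simp
  hence "imp_closed So W" by (simp add: closed_sets_def)
  thus ?thesis using assms(1,3) unfolding imp_closed_def by blast
qed

lemma F2: assumes "W \<subseteq> ZZ" "W \<notin> CC" shows "\<exists>p q. (p,q) \<in> So \<and> p \<subseteq> W \<and> \<not> q \<subseteq> W"
proof -
  have "W \<notin> closed_sets ZZ So" using cl_eq assms(2) by simp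
  hence "\<not> imp_closed So W" using assms(1) by (simp add: closed_sets_def)
  thus ?thesis unfolding imp_closed_def by auto
qed

lemma impl: assumes "(p,q) \<in> So" shows "p \<subseteq> ZZ \<and> q \<subseteq> ZZ \<and> q \<noteq> {}"
proof -
  have "\<forall>I\<in>So. is_implication ZZ I" using basis by (simp add: implication_basis_def)
  hence "is_implication ZZ (p,q)" using assms by (rule bspec)
  thus ?thesis unfolding is_implication_def by simp
qed

lemma nontriv_nc: "(p,q) \<in> So \<Longrightarrow> \<not> q \<subseteq> p \<Longrightarrow> p \<notin> CC"
  using F1 by blast

lemma typei: assumes e: "(p,q) \<in> So" and nt: "\<not> q \<subseteq> p" and i: "i \<in> {1..n}" and yi: "y i \<notin> p"
  shows "YY - {y i} \<subseteq> p \<and> A i \<subseteq> p \<and> q \<subseteq> p \<union> B i"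
proof -
  have pz: "p \<subseteq> ZZ" using impl[OF e] by blast
  have "p \<notin> CC" using nontriv_nc[OF e nt] .
  from nonclosed[OF pz this] i yi obtain j where j: "j \<in> {1..n}" "y j \<notin> p" "YY - {y j} \<subseteq> p" "A j \<subseteq> p"
    by blast
  have "j = i" using y_other[OF j(1) i] j(3) yi by blast
  with j have 1: "YY - {y i} \<subseteq> p \<and> A i \<subseteq> p" by simp
  have "p \<union> B i \<in> CC"
    unfolding C_char
  proof (intro conjI ballI impI)
    show "p \<union> B i \<subseteq> ZZ" using pz AB[OF i] by blast
    show "X \<subseteq> p \<union> B i" if "YY \<subseteq> p \<union> B i"
      using that yi y_notX[OF i] AB[OF i] i by blast
    fix k assume k: "k \<in> {1..n}" and "A k \<subseteq> p \<union> B i \<and> YY - {y k} \<subseteq> p \<union> B i"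
    then show "B k \<subseteq> p \<union> B i"
    proof (cases "k = i")
      case False
      then have "y i \<in> p \<union> B i" using y_other[OF k i] \<open>A k \<subseteq> p \<union> B i \<and> YY - {y k} \<subseteq> p \<union> B i\<close> by blast
      then show ?thesis using yi y_notX[OF i] AB[OF i] by blast
    qed simp
  qed
  hence "q \<subseteq> p \<union> B i" using F1[OF e] by blast
  with 1 show ?thesis by blast
qed


abbreviation "G0 \<equiv> {e \<in> So. \<not> snd e \<subseteq> fst e \<and> YY \<subseteq> fst e}"
abbreviation "GG i \<equiv> {e \<in> So. \<not> snd e \<subseteq> fst e \<and> y i \<notin> fst e}"
abbreviation "T0 \<equiv> {e \<in> So. snd e \<subseteq> fst e}"

lemma finZ: "finite ZZ" using finX by simp

lemma finSo: "finite So"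
proof -
  have "So \<subseteq> Pow ZZ \<times> Pow ZZ" using impl by auto
  moreover have "finite (Pow ZZ \<times> Pow ZZ)" using finZ by simp
  ultimately show ?thesis by (rule finite_subset)
qed

lemma Gi_a: assumes i: "i \<in> {1..n}" shows "\<exists>q. (PP i, q) \<in> GG i"
proof -
  have z: "PP i \<subseteq> ZZ" using AB[OF i] by blast
  obtain b where b: "b \<in> B i" using AB[OF i] by blast
  have "b \<notin> PP i" using b AB[OF i] disj by blast
  hence "\<not> B i \<subseteq> PP i" using b by blast
  hence "PP i \<notin> CC" unfolding C_char using i by blast
  from F2[OF z this] obtain p q where pq: "(p,q) \<in> So" "p \<subseteq> PP i" "\<not> q \<subseteq> PP i" by blast
  have nt: "\<not> q \<subseteq> p" using pq by blast
  have yi: "y i \<notin> PP i" using AB[OF i] y_notX[OF i] by blast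
  hence yp: "y i \<notin> p" using pq by blast
  from typei[OF pq(1) nt i yp] have "PP i \<subseteq> p" by blast
  hence "p = PP i" using pq by blast
  thus ?thesis using pq(1) nt yp by auto
qed

lemma Gi_b: assumes i: "i \<in> {1..n}" shows "B i \<subseteq> \<Union>(snd ` GG i)"
proof (rule ccontr)
  define U where "U = \<Union>(snd ` GG i)"
  define W where "W = PP i \<union> (B i \<inter> U)"
  assume nsub: "\<not> B i \<subseteq> \<Union>(snd ` GG i)"
  have ABi: "A i \<subseteq> X" "B i \<subseteq> X" "A i \<inter> B i = {}" using AB[OF i] by auto
  have yX: "y i \<notin> X" using y_notX[OF i] .
  have z: "W \<subseteq> ZZ" unfolding W_def using ABi by blast
  have yW: "y i \<notin> W" unfolding W_def using ABi yX by blast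
  obtain b where b: "b \<in> B i" "b \<notin> U" using nsub unfolding U_def by blast
  have bX: "b \<in> X" using b ABi by blast
  have bY: "b \<notin> YY" using bX disj by blast
  have bA: "b \<notin> A i" using b ABi by blast
  have "b \<notin> W" unfolding W_def using b bY bA by blast
  hence nB: "\<not> B i \<subseteq> W" using b by blast
  have AW: "A i \<subseteq> W" "YY - {y i} \<subseteq> W" unfolding W_def by blast+
  have "W \<notin> CC"
  proof
    assume "W \<in> CC"
    hence "\<forall>k\<in>{1..n}. A k \<subseteq> W \<and> YY - {y k} \<subseteq> W \<longrightarrow> B k \<subseteq> W"
      unfolding C_char by (elim conjE)
    hence "B i \<subseteq> W" using i AW by blast
    thus False using nB by blast
  qed
  from F2[OF z this] obtain p q where pq: "(p,q) \<in> So" "p \<subseteq> W" "\<not> q \<subseteq> W" by blast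
  have nt: "\<not> q \<subseteq> p" using pq by blast
  have yp: "y i \<notin> p" using pq(2) yW by blast
  have inG: "(p,q) \<in> GG i" using pq(1) nt yp by simp
  hence qU: "q \<subseteq> U" unfolding U_def by (intro Union_upper image_eqI[where x="(p,q)"]) simp_all
  have qpb: "q \<subseteq> p \<union> B i" using typei[OF pq(1) nt i yp] by blast
  obtain x where x: "x \<in> q" "x \<notin> W" using pq(3) by blast
  have "x \<in> B i" using x qpb pq(2) by blast
  moreover have "x \<in> U" using x qU by blast
  ultimately have "x \<in> W" unfolding W_def by blast
  thus False using x by blast
qed

lemma G0_a: "\<exists>q. (YY, q) \<in> G0"
proof -
  have z: "YY \<subseteq> ZZ" by blast
  obtain x where x: "x \<in> X" using Xne by blast
  have "x \<notin> YY" using x disj by blast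
  hence "\<not> X \<subseteq> YY" using x by blast
  hence "YY \<notin> CC" unfolding C_char by blast
  from F2[OF z this] obtain p q where pq: "(p,q) \<in> So" "p \<subseteq> YY" "\<not> q \<subseteq> YY" by blast
  have nt: "\<not> q \<subseteq> p" using pq by blast
  have pz: "p \<subseteq> ZZ" using pq(2) by blast
  have "YY \<subseteq> p"
  proof (rule ccontr)
    assume "\<not> YY \<subseteq> p"
    with nonclosed[OF pz nontriv_nc[OF pq(1) nt]] obtain j where j: "j \<in> {1..n}" "A j \<subseteq> p"
      by blast
    then have "A j \<subseteq> YY" using pq(2) by blast
    moreover have "A j \<subseteq> X" "A j \<noteq> {}" using AB[OF j(1)] by blast+
    ultimately show False using disj by blast
  qed
  hence "p = YY" using pq(2) by blast
  thus ?thesis using pq(1) nt by auto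
qed

lemma G0_b: "generator X SX (\<Union>(snd ` G0) \<inter> X)"
proof -
  define U where "U = \<Union>(snd ` G0)"
  define S where "S = U \<inter> X"
  define T where "T = imp_closure X SX S"
  have SX: "S \<subseteq> X" unfolding S_def by blast
  have cp1: "S \<subseteq> T" and cp2: "T \<subseteq> X" and cp3: "T \<in> closed_sets X SX"
    unfolding T_def using closure_props[OF X_closed SX] by auto
  have "T = X"
  proof (rule ccontr)
    assume ne: "T \<noteq> X"
    define W where "W = YY \<union> T"
    have z: "W \<subseteq> ZZ" unfolding W_def using cp2 by blast
    have nX: "\<not> X \<subseteq> W"
    proof
      assume "X \<subseteq> W"
      hence "X \<subseteq> T" unfolding W_def using disj by blast
      thus False using ne cp2 by blast
    qed
    have "W \<notin> CC"
    proof
      assume "W \<in> CC"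
      hence "YY \<subseteq> W \<longrightarrow> X \<subseteq> W" unfolding C_char by (elim conjE)
      thus False using nX unfolding W_def by blast
    qed
    from F2[OF z this] obtain p q where pq: "(p,q) \<in> So" "p \<subseteq> W" "\<not> q \<subseteq> W" by blast
    have nt: "\<not> q \<subseteq> p" using pq by blast
    have pz: "p \<subseteq> ZZ" using impl[OF pq(1)] by blast
    have qz: "q \<subseteq> ZZ" using impl[OF pq(1)] by blast
    from nonclosed[OF pz nontriv_nc[OF pq(1) nt]]
    show False
    proof
      assume "YY \<subseteq> p"
      hence "(p,q) \<in> G0" using pq(1) nt by simp
      hence qU: "q \<subseteq> U" unfolding U_def by (intro Union_upper image_eqI[where x="(p,q)"]) simp_all
      obtain x where x: "x \<in> q" "x \<notin> W" using pq(3) by blast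
      have "x \<notin> YY" using x(2) unfolding W_def by blast
      hence "x \<in> X" using x(1) qz by blast
      hence "x \<in> S" unfolding S_def using x qU by blast
      hence "x \<in> W" unfolding W_def using cp1 by blast
      thus False using x by blast
    next
      assume "\<exists>j\<in>{1..n}. y j \<notin> p \<and> YY - {y j} \<subseteq> p \<and> A j \<subseteq> p"
      then obtain j where j: "j \<in> {1..n}" "y j \<notin> p" "A j \<subseteq> p" by blast
      have qpb: "q \<subseteq> p \<union> B j" using typei[OF pq(1) nt j(1,2)] by blast
      have AjX: "A j \<subseteq> X" using AB[OF j(1)] by blast
      have "A j \<subseteq> W" using j(3) pq(2) by blast
      hence "A j \<subseteq> T" unfolding W_def using AjX disj by blast
      moreover have "(A j, B j) \<in> SX" using j(1) by blast
      moreover have "imp_closed SX T" using cp3 unfolding closed_sets_def by blast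
      ultimately have "B j \<subseteq> T" unfolding imp_closed_def by blast
      hence "q \<subseteq> W" using qpb pq(2) unfolding W_def by blast
      thus False using pq(3) by blast
    qed
  qed
  thus ?thesis unfolding generator_def S_def[symmetric] U_def[symmetric] using SX T_def by blast
qed


lemma fin_sub: "E \<subseteq> So \<Longrightarrow> finite E" using finSo finite_subset by blast

lemma elem_fin: "e \<in> So \<Longrightarrow> finite (fst e) \<and> finite (snd e) \<and> snd e \<noteq> {}"
  using impl[of "fst e" "snd e"] finZ finite_subset by auto

lemma decomp: "So = T0 \<union> G0 \<union> (\<Union>i\<in>{1..n}. GG i)"
proof (rule equalityI)
  show "So \<subseteq> T0 \<union> G0 \<union> (\<Union>i\<in>{1..n}. GG i)"
  proof
    fix e assume e: "e \<in> So"
    obtain p q where pq: "e = (p,q)" by (cases e)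
    show "e \<in> T0 \<union> G0 \<union> (\<Union>i\<in>{1..n}. GG i)"
    proof (cases "q \<subseteq> p")
      case True thus ?thesis using e pq by simp
    next
      case False
      have pz: "p \<subseteq> ZZ" using impl e pq by blast
      from nonclosed[OF pz nontriv_nc[OF e[unfolded pq] False]]
      show ?thesis
      proof
        assume "YY \<subseteq> p" thus ?thesis using e pq False by simp
      next
        assume "\<exists>j\<in>{1..n}. y j \<notin> p \<and> YY - {y j} \<subseteq> p \<and> A j \<subseteq> p"
        then obtain j where "j \<in> {1..n}" "y j \<notin> p" by blast
        thus ?thesis using e pq False by blast
      qed
    qed
  qed
qed auto

lemma GG_disj: assumes "i \<in> {1..n}" "j \<in> {1..n}" "i \<noteq> j" shows "GG i \<inter> GG j = {}"
proof (rule ccontr)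
  assume "GG i \<inter> GG j \<noteq> {}"
  then obtain e where e0: "e \<in> GG i" "e \<in> GG j" by blast
  obtain p q where pq: "e = (p,q)" by (cases e)
  have e: "(p,q) \<in> So" "\<not> q \<subseteq> p" "y i \<notin> p" "y j \<notin> p" using e0 pq by auto
  have "YY - {y i} \<subseteq> p" using typei[OF e(1,2) assms(1) e(3)] by blast
  thus False using y_other[OF assms] e(4) by blast
qed

lemma sum_decomp: "sum cst So = sum cst T0 + sum cst G0 + (\<Sum>i\<in>{1..n}. sum cst (GG i))"
proof -
  have f1: "finite T0" "finite G0" "finite (\<Union>i\<in>{1..n}. GG i)" using fin_sub by auto
  have d1: "T0 \<inter> (G0 \<union> (\<Union>i\<in>{1..n}. GG i)) = {}" by auto
  have d2: "G0 \<inter> (\<Union>i\<in>{1..n}. GG i) = {}"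
  proof (rule ccontr)
    assume "G0 \<inter> (\<Union>i\<in>{1..n}. GG i) \<noteq> {}"
    then obtain e i where "i \<in> {1..n}" "YY \<subseteq> fst e" "y i \<notin> fst e" by blast
    thus False by blast
  qed
  have "So = T0 \<union> (G0 \<union> (\<Union>i\<in>{1..n}. GG i))" using decomp by blast
  hence "sum cst So = sum cst T0 + sum cst (G0 \<union> (\<Union>i\<in>{1..n}. GG i))"
    using sum.union_disjoint[OF f1(1) _ d1] f1 by simp
  also have "sum cst (G0 \<union> (\<Union>i\<in>{1..n}. GG i)) = sum cst G0 + sum cst (\<Union>i\<in>{1..n}. GG i)"
    using sum.union_disjoint[OF f1(2) f1(3) d2] .
  also have "sum cst (\<Union>i\<in>{1..n}. GG i) = (\<Sum>i\<in>{1..n}. sum cst (GG i))"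
    by (rule sum.UNION_disjoint) (use fin_sub GG_disj in auto)
  finally show ?thesis by simp
qed


lemma main: "\<exists>S. min_card_generator X SX S \<and> So = (\<lambda>i. (PP i, B i)) ` {1..n} \<union> {(YY, S)}"
proof -
  define L where "L = (\<lambda>i. (PP i, B i)) ` {1..n}"
  have genX: "generator X SX X"
  proof -
    have "imp_closure X SX X = X" using closure_props[OF X_closed, of X] by blast
    thus ?thesis unfolding generator_def by blast
  qed
  obtain S0 where S0: "generator X SX S0" "\<And>T. generator X SX T \<Longrightarrow> card S0 \<le> card T"
    using ex_has_least_nat[of "generator X SX" X card, OF genX] by blast
  have S0X: "S0 \<subseteq> X" using S0(1) unfolding generator_def by blast
  have S0ne: "S0 \<noteq> {}"
  proof
    assume e: "S0 = {}"
    have "{} \<in> closed_sets X SX" unfolding closed_sets_def imp_closed_def using AB by auto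
    hence "imp_closure X SX {} \<subseteq> {}" unfolding imp_closure_def by blast
    thus False using S0(1) e Xne unfolding generator_def by blast
  qed
  define Fm where "Fm = L \<union> {(YY, S0)}"
  have Fchar: "W \<in> closed_sets ZZ Fm \<longleftrightarrow> W \<subseteq> ZZ \<and> (YY \<subseteq> W \<longrightarrow> S0 \<subseteq> W) \<and>
   (\<forall>i\<in>{1..n}. A i \<subseteq> W \<and> YY - {y i} \<subseteq> W \<longrightarrow> B i \<subseteq> W)" for W
    unfolding Fm_def L_def closed_sets_def imp_closed_def by auto
  have basisF: "implication_basis ZZ CC Fm"
    unfolding implication_basis_def
  proof
    show "\<forall>I\<in>Fm. is_implication ZZ I"
    proof
      fix I assume I: "I \<in> Fm"
      show "is_implication ZZ I"
      proof (cases "I = (YY, S0)")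
        case True thus ?thesis unfolding is_implication_def using S0X S0ne by auto
      next
        case False
        hence "I \<in> L" using I unfolding Fm_def by blast
        then obtain i where i: "i \<in> {1..n}" "I = (PP i, B i)" unfolding L_def by blast
        have "A i \<subseteq> X" "B i \<subseteq> X" "B i \<noteq> {}" using AB[OF i(1)] by auto
        thus ?thesis unfolding is_implication_def using i(2) by auto
      qed
    qed
    show "closed_sets ZZ Fm = CC"
    proof (rule set_eqI)
      fix W
      show "W \<in> closed_sets ZZ Fm \<longleftrightarrow> W \<in> CC"
      proof
        assume W: "W \<in> closed_sets ZZ Fm"
        have "YY \<subseteq> W \<longrightarrow> X \<subseteq> W"
        proof
          assume Y: "YY \<subseteq> W"
          define T where "T = W \<inter> X"
          have H: "B i \<subseteq> T" if i: "i \<in> {1..n}" and sub: "A i \<subseteq> T" for i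
          proof -
            have "A i \<subseteq> W" using sub T_def by blast
            moreover have "YY - {y i} \<subseteq> W" using Y by blast
            ultimately have "B i \<subseteq> W" using W i unfolding Fchar by blast
            thus "B i \<subseteq> T" unfolding T_def using AB[OF i] by blast
          qed
          have "imp_closed SX T" unfolding imp_closed_def using H by blast
          hence "T \<in> closed_sets X SX" unfolding closed_sets_def T_def by blast
          moreover have "S0 \<subseteq> T" using Y W S0X unfolding Fchar T_def by blast
          ultimately have "imp_closure X SX S0 \<subseteq> T" unfolding imp_closure_def by blast
          thus "X \<subseteq> W" using S0(1) unfolding generator_def T_def by blast
        qed
        thus "W \<in> CC" using W unfolding Fchar C_char by blast
      next
        assume W: "W \<in> CC"
        thus "W \<in> closed_sets ZZ Fm" unfolding Fchar C_char using S0X by blast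
      qed
    qed
  qed
  have le: "sum cst So \<le> sum cst Fm"
    using opt basisF unfolding optimum_basis_def imp_size_cst by blast
  have injL: "inj_on (\<lambda>i. (PP i, B i)) {1..n}"
  proof (rule inj_onI)
    fix i j assume i: "i \<in> {1..n}" and j: "j \<in> {1..n}" and eq: "(PP i, B i) = (PP j, B j)"
    show "i = j"
    proof (rule ccontr)
      assume "i \<noteq> j"
      hence "y j \<in> PP i" using y_other[OF i j] by blast
      moreover have "y j \<notin> PP j" using y_notX[OF j] AB[OF j] by blast
      moreover have "PP i = PP j" using eq by simp
      ultimately show False by blast
    qed
  qed
  have notL: "(YY, S0) \<notin> L"
  proof
    assume "(YY, S0) \<in> L"
    then obtain i where i: "i \<in> {1..n}" "YY = PP i" unfolding L_def by auto
    have "y i \<in> YY" using i(1) by blast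
    moreover have "y i \<notin> PP i" using y_notX[OF i(1)] AB[OF i(1)] by blast
    ultimately show False using i(2) by blast
  qed
  have cardY: "card YY = n" using card_image[OF injy] by simp
  have sumF: "sum cst Fm = (\<Sum>i\<in>{1..n}. cst (PP i, B i)) + (n + card S0)"
  proof -
    have "sum cst Fm = sum cst L + cst (YY, S0)"
      unfolding Fm_def using notL L_def by simp
    also have "sum cst L = (\<Sum>i\<in>{1..n}. cst (PP i, B i))"
      unfolding L_def using sum.reindex[OF injL, of cst] by (simp add: comp_def)
    finally show ?thesis using cardY by (simp add: cst_def)
  qed
  have bi: "cst (PP i, B i) \<le> sum cst (GG i) \<and> (sum cst (GG i) \<le> cst (PP i, B i) \<longrightarrow> GG i = {(PP i, B i)})"
    if i: "i \<in> {1..n}" for i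
  proof -
    obtain q where q: "(PP i, q) \<in> GG i" using Gi_a[OF i] by blast
    have ne: "\<forall>e\<in>GG i. fst e \<noteq> {} \<and> finite (fst e) \<and> finite (snd e)"
    proof
      fix e assume e: "e \<in> GG i"
      obtain p q where pq: "e = (p,q)" by (cases e)
      have "A i \<subseteq> p" using typei[of p q i] e pq i by auto
      hence "p \<noteq> {}" using AB[OF i] by blast
      thus "fst e \<noteq> {} \<and> finite (fst e) \<and> finite (snd e)" using elem_fin[of e] e pq by auto
    qed
    show ?thesis using cost[OF fin_sub[of "GG i"] q ne Gi_b[OF i]] by (simp add: cst_def)
  qed
  define S where "S = \<Union>(snd ` G0) \<inter> X"
  have genS: "generator X SX S" using G0_b S_def by simp
  have SS0: "card S0 \<le> card S" using S0(2)[OF genS] .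
  have b0: "n + card S \<le> sum cst G0 \<and> (sum cst G0 \<le> n + card S \<longrightarrow> G0 = {(YY, S)})"
  proof -
    obtain q where q: "(YY, q) \<in> G0" using G0_a by blast
    have Yne: "YY \<noteq> {}" using n1 by auto
    have ne: "\<forall>e\<in>G0. fst e \<noteq> {} \<and> finite (fst e) \<and> finite (snd e)"
    proof
      fix e assume e: "e \<in> G0"
      hence "YY \<subseteq> fst e" by simp
      hence "fst e \<noteq> {}" using Yne by blast
      thus "fst e \<noteq> {} \<and> finite (fst e) \<and> finite (snd e)" using elem_fin[of e] e by simp
    qed
    have sub: "S \<subseteq> \<Union>(snd ` G0)" unfolding S_def by blast
    show ?thesis using cost[OF fin_sub[of G0] q ne sub] cardY by simp
  qed
  have t0: "sum cst T0 = 0 \<Longrightarrow> T0 = {}"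
  proof -
    assume z: "sum cst T0 = 0"
    have "\<forall>e\<in>T0. cst e = 0" using z sum_eq_0_iff[OF fin_sub[of T0]] by blast
    moreover have "\<forall>e\<in>T0. cst e \<noteq> 0" using elem_fin unfolding cst_def by (auto simp: card_gt_0_iff)
    ultimately show "T0 = {}" by blast
  qed
  have tot: "sum cst T0 + sum cst G0 + (\<Sum>i\<in>{1..n}. sum cst (GG i)) \<le> (\<Sum>i\<in>{1..n}. cst (PP i, B i)) + (n + card S0)"
    using le sumF sum_decomp by simp
  have sa: "(\<Sum>i\<in>{1..n}. sum cst (GG i)) \<le> (\<Sum>i\<in>{1..n}. cst (PP i, B i))"
    using tot b0 SS0 by linarith
  have eqi: "GG i = {(PP i, B i)}" if i: "i \<in> {1..n}" for i
  proof -
    have "sum cst (GG i) \<le> cst (PP i, B i)"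
    proof (rule ccontr)
      assume c: "\<not> ?thesis"
      have "(\<Sum>i\<in>{1..n}. cst (PP i, B i)) < (\<Sum>i\<in>{1..n}. sum cst (GG i))"
      proof (rule sum_strict_mono_ex1)
        show "\<forall>k\<in>{1..n}. cst (PP k, B k) \<le> sum cst (GG k)" using bi by blast
        show "\<exists>k\<in>{1..n}. cst (PP k, B k) < sum cst (GG k)" using c i by (intro bexI[of _ i]) auto
      qed simp
      thus False using sa by linarith
    qed
    thus ?thesis using bi[OF i] by blast
  qed
  have sumG: "(\<Sum>i\<in>{1..n}. cst (PP i, B i)) \<le> (\<Sum>i\<in>{1..n}. sum cst (GG i))"
    using bi by (intro sum_mono) blast
  have a1: "sum cst G0 \<le> n + card S" and cS: "card S \<le> card S0" and a3: "sum cst T0 = 0"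
    using tot b0 SS0 sumG by linarith+
  have g0: "G0 = {(YY, S)}" using b0 a1 by blast
  have T0e: "T0 = {}" using t0 a3 by blast
  have "So = L \<union> {(YY, S)}"
  proof -
    have "(\<Union>i\<in>{1..n}. GG i) = L" unfolding L_def using eqi by auto
    thus ?thesis using decomp g0 T0e by auto
  qed
  moreover have "min_card_generator X SX S"
    unfolding min_card_generator_def using genS cS S0(2) by (meson le_trans)
  ultimately show ?thesis unfolding L_def by blast
qed
end
end

theorem claim2:
  fixes X :: "'a set" and n :: nat
    and A B :: "nat \<Rightarrow> 'a set" and y :: "nat \<Rightarrow> 'a"
  assumes "finite X" and "X \<noteq> {}" and "n \<ge> 1"
    and "\<And>i. i \<in> {1..n} \<Longrightarrow> A i \<subseteq> X \<and> B i \<subseteq> X \<and> A i \<noteq> {} \<and> B i \<noteq> {} \<and> A i \<inter> B i = {}"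
    and "inj_on y {1..n}"
    and "y ` {1..n} \<inter> X = {}"
  shows "\<forall>\<Sigma>o. optimum_basis (X \<union> y ` {1..n})
            (closed_sets (X \<union> y ` {1..n})
              ((\<lambda>i. (A i \<union> (y ` {1..n} - {y i}), B i)) ` {1..n} \<union> {(y ` {1..n}, X)})) \<Sigma>o
          \<longrightarrow> (\<exists>S. min_card_generator X ((\<lambda>i. (A i, B i)) ` {1..n}) S \<and>
                  \<Sigma>o = (\<lambda>i. (A i \<union> (y ` {1..n} - {y i}), B i)) ` {1..n} \<union> {(y ` {1..n}, S)})"
proof (intro allI impI)
  fix So
  interpret cs X n A B y by (rule cs.intro) (fact assms)+
  assume "optimum_basis (X \<union> y ` {1..n})
            (closed_sets (X \<union> y ` {1..n})
              ((\<lambda>i. (A i \<union> (y ` {1..n} - {y i}), B i)) ` {1..n} \<union> {(y ` {1..n}, X)})) So"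
  from main[OF this] show "\<exists>S. min_card_generator X ((\<lambda>i. (A i, B i)) ` {1..n}) S \<and>
                  So = (\<lambda>i. (A i \<union> (y ` {1..n} - {y i}), B i)) ` {1..n} \<union> {(y ` {1..n}, S)}" .
qed

end
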